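(* Let $G$ be a connected threshold graph of order $n\ge 4$ and size $m$ with $n-1<m<\binom{n}{2}$, let $c$ be its number of type 1 vertices, $(b_1,\ldots,b_z)$ its backwards zero position sequence, $F_1=\sum_{i=1}^z b_i^2$, and $\rho$ the spectral radius of its adjacency matrix. Then the greatest real root $\xi$ of the polynomial $x^3-(c+1)x^2+cx-F_1$ satisfies $\xi\le 1+\rho$.
   Context: A threshold graph is a simple graph whose vertices can be ordered $v_1,\ldots,v_n$ so that for each $2\le i\le n$, $v_i$ is either adjacent to all of $v_1,\ldots,v_{i-1}$ (then $a_i=1$) or to none of them (then $a_i=0$); by convention $a_1=1$. Vertex $v_i$ is of type 1 if $a_i=1$ and of type 0 if $a_i=0$; $c$ and $z$ are the numbers of type 1 and type 0 vertices ($c+z=n$). The backwards zero position sequence $(b_1,\ldots,b_z)$ is defined by letting $b_i$ be the number of type 1 vertices appearing after the $i$-th type 0 vertex in the order $v_1,\ldots,v_n$. *)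

theory Defs
  imports "Jordan_Normal_Form.Spectral_Radius"
begin

text \<open>A threshold graph on vertices 0,...,n-1 is given by its creation sequence
  a = [a_1,...,a_n] (stored 0-indexed as a list of booleans, True = type 1),
  with the convention a_1 = True. Vertex j is adjacent to all earlier vertices
  iff a!j, so distinct i,j are adjacent iff a!(max i j).\<close>

definition thr_adj :: "bool list \<Rightarrow> nat \<Rightarrow> nat \<Rightarrow> bool" where
  "thr_adj a i j \<longleftrightarrow> i < length a \<and> j < length a \<and> i \<noteq> j \<and> a ! (max i j)"

definition thr_connected :: "bool list \<Rightarrow> bool" where
  "thr_connected a \<longleftrightarrow> (\<forall>i<length a. \<forall>j<length a. (thr_adj a)\<^sup>*\<^sup>* i j)"

definition thr_size :: "bool list \<Rightarrow> nat" where
  "thr_size a = card {(i, j). i < j \<and> j < length a \<and> thr_adj a i j}"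

definition thr_c :: "bool list \<Rightarrow> nat" where
  "thr_c a = length (filter id a)"

definition thr_bzp :: "bool list \<Rightarrow> nat list" where
  "thr_bzp a = map (\<lambda>p. length (filter id (drop (Suc p) a)))
                   (filter (\<lambda>p. \<not> a ! p) [0..<length a])"

definition thr_F1 :: "bool list \<Rightarrow> nat" where
  "thr_F1 a = sum_list (map (\<lambda>b. b ^ 2) (thr_bzp a))"

definition thr_adj_mat :: "bool list \<Rightarrow> complex mat" where
  "thr_adj_mat a = mat (length a) (length a) (\<lambda>(i, j). if thr_adj a i j then 1 else 0)"

end

theory Submission
  imports Defs
begin

lemma cs_sum:
  fixes a b :: "nat \<Rightarrow> real"
  shows "(\<Sum>i\<in>I. a i * b i)^2 \<le> (\<Sum>i\<in>I. (a i)^2) * (\<Sum>i\<in>I. (b i)^2)"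
proof -
  define sa where "sa = (\<Sum>i\<in>I. (a i)^2)"
  define sb where "sb = (\<Sum>i\<in>I. (b i)^2)"
  define t where "t = (\<Sum>i\<in>I. a i * b i)"
  have sb0: "sb \<ge> 0" unfolding sb_def by (simp add: sum_nonneg)
  have "0 \<le> (\<Sum>i\<in>I. (sb * a i - t * b i)^2)" by (simp add: sum_nonneg)
  also have "\<dots> = (\<Sum>i\<in>I. sb^2 * (a i)^2 - (2*sb*t) * (a i * b i) + t^2 * (b i)^2)"
    by (rule sum.cong) (simp_all add: power2_eq_square algebra_simps)
  also have "\<dots> = sb^2 * sa - 2 * sb * t * t + t^2 * sb"
    unfolding sa_def sb_def t_def
    by (simp add: sum.distrib sum_subtractf sum_distrib_left)
  also have "\<dots> = sb * (sa * sb - t^2)" by (simp add: algebra_simps power2_eq_square)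
  finally have h: "0 \<le> sb * (sa * sb - t^2)" .
  show ?thesis
  proof (cases "sb > 0")
    case True
    then show ?thesis using h unfolding sa_def[symmetric] sb_def[symmetric] t_def[symmetric]
      by (simp add: zero_le_mult_iff)
  next
    case False
    with sb0 have "sb = 0" by simp
    hence "\<forall>i\<in>I. b i = 0 \<or> infinite I" unfolding sb_def
      by (metis (mono_tags, lifting) sum_nonneg_eq_0_iff zero_le_power2 power_eq_0_iff zero_neq_numeral)
    then show ?thesis by (cases "finite I") auto
  qed
qed

lemma pow_mat_add: assumes A: "A \<in> carrier_mat n n"
  shows "A ^\<^sub>m (i + j) = A ^\<^sub>m i * A ^\<^sub>m j"
proof (induct j)
  case 0 then show ?case using A by simp
next
  case (Suc j)
  have "A ^\<^sub>m (i + Suc j) = (A ^\<^sub>m i * A ^\<^sub>m j) * A" using Suc by simp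
  also have "\<dots> = A ^\<^sub>m i * (A ^\<^sub>m j * A)"
    by (rule assoc_mult_mat[of _ n n _ n _ n]) (use A in auto)
  finally show ?case by simp
qed

lemma pow_mat_sym: fixes A :: "'a::comm_semiring_1 mat" assumes A: "A \<in> carrier_mat n n" and s: "transpose_mat A = A"
  shows "transpose_mat (A ^\<^sub>m k) = A ^\<^sub>m k"
proof (induct k)
  case 0 then show ?case using A by simp
next
  case (Suc k)
  have "transpose_mat (A ^\<^sub>m Suc k) = transpose_mat A * transpose_mat (A ^\<^sub>m k)"
    using transpose_mult[OF pow_carrier_mat[OF A] A] by simp
  also have "\<dots> = A ^\<^sub>m 1 * A ^\<^sub>m k" using Suc s A by (simp add: left_mult_one_mat[OF A])
  also have "\<dots> = A ^\<^sub>m (1 + k)" by (rule pow_mat_add[OF A, symmetric])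
  finally show ?case by simp
qed

lemma quad_bound:
  fixes Q :: "real mat" and x :: "real vec"
  assumes Q: "Q \<in> carrier_mat n n" and x: "x \<in> carrier_vec n"
    and b: "\<And>i j. i < n \<Longrightarrow> j < n \<Longrightarrow> \<bar>Q $$ (i,j)\<bar> \<le> C"
  shows "\<bar>x \<bullet> (Q *\<^sub>v x)\<bar> \<le> C * (\<Sum>i<n. \<bar>x $ i\<bar>)^2"
proof -
  have e: "x \<bullet> (Q *\<^sub>v x) = (\<Sum>i<n. \<Sum>j<n. x $ i * Q $$ (i,j) * x $ j)"
    using Q x by (auto simp: scalar_prod_def mult_mat_vec_def sum_distrib_left lessThan_atLeast0 mult.assoc intro!: sum.cong)
  have "\<bar>\<Sum>i<n. \<Sum>j<n. x $ i * Q $$ (i,j) * x $ j\<bar> \<le> (\<Sum>i<n. \<Sum>j<n. \<bar>x $ i * Q $$ (i,j) * x $ j\<bar>)"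
    by (rule order_trans[OF sum_abs], rule sum_mono, rule sum_abs)
  also have "\<dots> \<le> (\<Sum>i<n. \<Sum>j<n. C * (\<bar>x $ i\<bar> * \<bar>x $ j\<bar>))"
  proof (intro sum_mono)
    fix i j assume "i \<in> {..<n}" "j \<in> {..<n}"
    then have "\<bar>Q $$ (i,j)\<bar> \<le> C" using b by auto
    then show "\<bar>x $ i * Q $$ (i,j) * x $ j\<bar> \<le> C * (\<bar>x $ i\<bar> * \<bar>x $ j\<bar>)"
    proof -
      have "\<bar>x $ i\<bar> * \<bar>Q $$ (i,j)\<bar> * \<bar>x $ j\<bar> \<le> \<bar>x $ i\<bar> * C * \<bar>x $ j\<bar>"
        by (intro mult_right_mono mult_left_mono) (use \<open>\<bar>Q $$ (i,j)\<bar> \<le> C\<close> in auto)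
      then show ?thesis by (simp add: abs_mult algebra_simps)
    qed
  qed
  also have "\<dots> = C * (\<Sum>i<n. \<Sum>j<n. \<bar>x $ i\<bar> * \<bar>x $ j\<bar>)"
    by (simp add: sum_distrib_left)
  also have "\<dots> = C * (\<Sum>i<n. \<bar>x $ i\<bar>)^2"
    by (simp add: power2_eq_square sum_product)
  finally show ?thesis using e by simp
qed

lemma growth_contra:
  fixes M :: "real mat" and x :: "real vec"
  assumes M: "M \<in> carrier_mat n n" and sym: "transpose_mat M = M"
    and x: "x \<in> carrier_vec n" and s: "x \<bullet> x > 0" and nu: "\<nu> > 1"
    and ray: "x \<bullet> (M *\<^sub>v x) \<ge> \<nu> * (x \<bullet> x)"
    and bnd: "\<And>k i j. i < n \<Longrightarrow> j < n \<Longrightarrow> \<bar>(M ^\<^sub>m k) $$ (i,j)\<bar> \<le> C"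
  shows False
proof -
  define s where "s = x \<bullet> x"
  define r where "r k = x \<bullet> (M ^\<^sub>m (2^k) *\<^sub>v x)" for k
  have step: "r (Suc k) * s \<ge> (r k)^2" for k
  proof -
    define P where "P = M ^\<^sub>m (2^k)"
    have P: "P \<in> carrier_mat n n" unfolding P_def using M by simp
    have Ps: "transpose_mat P = P" unfolding P_def by (rule pow_mat_sym[OF M sym])
    define y where "y = P *\<^sub>v x"
    have y: "y \<in> carrier_vec n" unfolding y_def using P x by simp
    have "M ^\<^sub>m (2^Suc k) = P * P" unfolding P_def using pow_mat_add[OF M, of "2^k" "2^k"] by (simp add: mult_2)
    hence "r (Suc k) = x \<bullet> ((P * P) *\<^sub>v x)" unfolding r_def by simp
    also have "\<dots> = x \<bullet> (P *\<^sub>v y)" unfolding y_def using P x by (simp add: assoc_mult_mat_vec[OF P P x])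
    also have "\<dots> = (transpose_mat P *\<^sub>v x) \<bullet> y" using transpose_vec_mult_scalar[OF P y x] by simp
    also have "\<dots> = y \<bullet> y" using Ps y_def by simp
    finally have e1: "r (Suc k) = y \<bullet> y" .
    have e2: "r k = x \<bullet> y" unfolding r_def y_def P_def by simp
    have cs: "(x \<bullet> y)^2 \<le> (x \<bullet> x) * (y \<bullet> y)"
    proof -
      have "(x \<bullet> y) = (\<Sum>i\<in>{0..<n}. x $ i * y $ i)" using x y by (simp add: scalar_prod_def)
      moreover have "x \<bullet> x = (\<Sum>i\<in>{0..<n}. (x $ i)^2)" using x by (simp add: scalar_prod_def power2_eq_square)
      moreover have "y \<bullet> y = (\<Sum>i\<in>{0..<n}. (y $ i)^2)" using y by (simp add: scalar_prod_def power2_eq_square)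
      ultimately show ?thesis using cs_sum[of "\<lambda>i. x $ i" "\<lambda>i. y $ i" "{0..<n}"] by simp
    qed
    show ?thesis using cs e1 e2 unfolding s_def by (simp add: mult.commute)
  qed
  have spos: "s > 0" using s unfolding s_def .
  have lower: "r k \<ge> \<nu>^(2^k) * s" for k
  proof (induct k)
    case 0
    have "M ^\<^sub>m 1 = M" using M by (simp add: left_mult_one_mat[OF M])
    then show ?case using ray unfolding r_def s_def by simp
  next
    case (Suc k)
    have nn: "0 \<le> \<nu>^(2^k) * s" using nu spos by simp
    have "(\<nu>^(2^k) * s)^2 \<le> (r k)^2" using Suc nn by (simp add: power_mono)
    also have "\<dots> \<le> r (Suc k) * s" by (rule step)
    finally have "(\<nu>^(2^Suc k)) * s * s \<le> r (Suc k) * s"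
      by (simp add: power2_eq_square power_mult[symmetric] power_add[symmetric] mult_2 algebra_simps)
    then show ?case using spos by simp
  qed
  define D where "D = C * (\<Sum>i<n. \<bar>x $ i\<bar>)^2"
  have upper: "r k \<le> D" for k
  proof -
    have "\<bar>r k\<bar> \<le> D" unfolding r_def D_def
      by (rule quad_bound[of _ n]) (use M x bnd in auto)
    then show ?thesis by simp
  qed
  have "\<nu>^k \<le> D / s" for k
  proof -
    have "\<nu>^k \<le> \<nu>^(2^k)" using nu by (intro power_increasing) (auto intro: less_imp_le[OF less_exp])
    also have "\<dots> \<le> D / s" using lower[of k] upper[of k] spos by (simp add: pos_le_divide_eq)
    finally show ?thesis .
  qed
  moreover obtain k where "D / s < \<nu>^k" using real_arch_pow[OF nu] by blast
  ultimately show False by (meson not_le)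
qed

lemma rayleigh_sr:
  fixes Ar :: "real mat" and x :: "real vec"
  assumes Ar: "Ar \<in> carrier_mat n n" and sym: "transpose_mat Ar = Ar"
    and x: "x \<in> carrier_vec n" and s: "x \<bullet> x > 0" and mu: "\<mu> > 0"
    and ray: "x \<bullet> (Ar *\<^sub>v x) \<ge> \<mu> * (x \<bullet> x)"
  shows "\<mu> \<le> spectral_radius (map_mat complex_of_real Ar)"
proof (rule ccontr)
  define A where "A = map_mat complex_of_real Ar"
  define \<rho> where "\<rho> = spectral_radius A"
  assume "\<not> \<mu> \<le> spectral_radius (map_mat complex_of_real Ar)"
  hence lt: "\<rho> < \<mu>" unfolding \<rho>_def A_def by simp
  have A: "A \<in> carrier_mat n n" unfolding A_def using Ar by simp
  have n: "n > 0"
  proof (rule ccontr)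
    assume "\<not> n > 0" hence "n = 0" by simp
    hence "x \<bullet> x = 0" using x by (simp add: scalar_prod_def)
    with s show False by simp
  qed
  have rho0: "\<rho> \<ge> 0" using spectral_radius_mem_max(1)[OF A n] unfolding \<rho>_def by auto
  define m' where "m' = (\<rho> + \<mu>) / 2"
  have m'pos: "m' > 0" and m'lt: "m' < \<mu>" and rm: "\<rho> < m'" using rho0 lt mu unfolding m'_def by auto
  define Br where "Br = (1 / m') \<cdot>\<^sub>m Ar"
  define B where "B = map_mat complex_of_real Br"
  have Br: "Br \<in> carrier_mat n n" unfolding Br_def using Ar by simp
  have B: "B \<in> carrier_mat n n" unfolding B_def using Br by simp
  have AB: "A = complex_of_real m' \<cdot>\<^sub>m B"
    unfolding A_def B_def Br_def using Ar m'pos by (intro eq_matI) auto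
  have srB: "spectral_radius B < 1"
  proof -
    from spectral_radius_mem_max(1)[OF B n] obtain l where l: "l \<in> spectrum B"
      and eq: "spectral_radius B = norm l" by auto
    from l obtain v where v: "v \<in> carrier_vec n" "v \<noteq> 0\<^sub>v n" "B *\<^sub>v v = l \<cdot>\<^sub>v v"
      unfolding spectrum_def eigenvalue_def eigenvector_def using B by auto
    have "A *\<^sub>v v = (complex_of_real m' * l) \<cdot>\<^sub>v v"
    proof -
      have "A *\<^sub>v v = complex_of_real m' \<cdot>\<^sub>v (B *\<^sub>v v)" unfolding AB
        using B v(1) by (intro eq_vecI) (auto simp: scalar_prod_def sum_distrib_left mult.assoc)
      then show ?thesis using v(3) by (simp add: smult_smult_assoc)
    qed
    hence "eigenvalue A (complex_of_real m' * l)"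
      unfolding eigenvalue_def eigenvector_def using A v by auto
    hence "norm (complex_of_real m' * l) \<le> \<rho>"
      unfolding \<rho>_def by (intro spectral_radius_mem_max(2)[OF A n]) (auto simp: spectrum_def)
    hence "m' * norm l \<le> \<rho>" using m'pos by (simp add: norm_mult)
    hence "m' * norm l < m' * 1" using rm by simp
    then show ?thesis using eq m'pos by simp
  qed
  from spectral_radius_jnf_norm_bound_less_1_upper_triangular[OF B srB]
  obtain C where C: "\<And>k. norm_bound (B ^\<^sub>m k) C" by auto
  have bnd: "\<bar>(Br ^\<^sub>m k) $$ (i,j)\<bar> \<le> C" if "i < n" "j < n" for k i j
  proof -
    have "B ^\<^sub>m k = map_mat complex_of_real (Br ^\<^sub>m k)"
      unfolding B_def by (rule of_real_hom.mat_hom_pow[OF Br, symmetric])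
    moreover have "norm ((B ^\<^sub>m k) $$ (i,j)) \<le> C" using C[of k] that B
      unfolding norm_bound_def by simp
    ultimately show ?thesis using that Br by simp
  qed
  have ray': "x \<bullet> (Br *\<^sub>v x) \<ge> (\<mu> / m') * (x \<bullet> x)"
  proof -
    have "Br *\<^sub>v x = (1 / m') \<cdot>\<^sub>v (Ar *\<^sub>v x)" unfolding Br_def
      using Ar x by (intro eq_vecI) (auto simp: scalar_prod_def sum_distrib_left mult.assoc)
    hence "x \<bullet> (Br *\<^sub>v x) = (1/m') * (x \<bullet> (Ar *\<^sub>v x))" using x Ar by simp
    moreover have "(1/m') * (\<mu> * (x \<bullet> x)) \<le> (1/m') * (x \<bullet> (Ar *\<^sub>v x))"
      using ray m'pos by (intro mult_left_mono) auto
    ultimately show ?thesis by simp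
  qed
  have symBr: "transpose_mat Br = Br"
  proof (rule eq_matI)
    fix i j assume ij: "i < dim_row Br" "j < dim_col Br"
    have "Ar $$ (j,i) = Ar $$ (i,j)" using arg_cong[OF sym, of "\<lambda>M. M $$ (i,j)"] ij Br Ar by auto
    then show "transpose_mat Br $$ (i,j) = Br $$ (i,j)" using ij Br Ar unfolding Br_def by auto
  qed (use Br in auto)
  show False
    by (rule growth_contra[OF Br symBr x s _ ray' bnd])
       (use m'pos m'lt in auto)
qed

definition bb :: "bool list \<Rightarrow> nat \<Rightarrow> nat" where
  "bb a p = card {j. p < j \<and> j < length a \<and> a ! j}"

lemma thr_c_card: "thr_c a = card {i. i < length a \<and> a ! i}"
  unfolding thr_c_def by (simp add: length_filter_conv_card)

lemma len_drop_card: "length (filter id (drop (Suc p) a)) = bb a p"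
proof -
  have "length (filter id (drop (Suc p) a)) = card {i. i < length a - Suc p \<and> drop (Suc p) a ! i}"
    by (simp add: length_filter_conv_card)
  also have "\<dots> = card {i. i < length a - Suc p \<and> a ! (Suc p + i)}"
    by (rule arg_cong[where f=card]) (auto simp: nth_drop)
  also have "\<dots> = card ((\<lambda>i. Suc p + i) ` {i. i < length a - Suc p \<and> a ! (Suc p + i)})"
    by (rule card_image[symmetric]) (simp add: inj_on_def)
  also have "(\<lambda>i. Suc p + i) ` {i. i < length a - Suc p \<and> a ! (Suc p + i)} = {j. p < j \<and> j < length a \<and> a ! j}"
  proof -
    { fix j assume "p < j" "j < length a" "a ! j"
      hence "j \<in> (\<lambda>i. Suc p + i) ` {i. i < length a - Suc p \<and> a ! (Suc p + i)}"
        by (auto intro!: image_eqI[of _ _ "j - Suc p"]) }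
    then show ?thesis by auto
  qed
  finally show ?thesis unfolding bb_def .
qed

lemma thr_F1_sum: "thr_F1 a = (\<Sum>p\<in>{p. p < length a \<and> \<not> a ! p}. (bb a p)^2)"
proof -
  have "thr_F1 a = sum_list (map (\<lambda>p. (bb a p)^2) (filter (\<lambda>p. \<not> a ! p) [0..<length a]))"
    unfolding thr_F1_def thr_bzp_def by (simp add: len_drop_card comp_def)
  also have "\<dots> = (\<Sum>p\<in>set (filter (\<lambda>p. \<not> a ! p) [0..<length a]). (bb a p)^2)"
    by (rule sum_list_distinct_conv_sum_set) simp
  also have "set (filter (\<lambda>p. \<not> a ! p) [0..<length a]) = {p. p < length a \<and> \<not> a ! p}" by auto
  finally show ?thesis .
qed

lemma sum_ind: fixes n :: nat shows "(\<Sum>j<n. if P j then (1::real) else 0) = real (card {j. j < n \<and> P j})"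
proof -
  have "(\<Sum>j<n. if P j then (1::real) else 0) = (\<Sum>j\<in>{j. j < n \<and> P j}. 1)"
    by (rule sum.mono_neutral_cong_right) auto
  then show ?thesis by simp
qed

definition Ar :: "bool list \<Rightarrow> real mat" where
  "Ar a = mat (length a) (length a) (\<lambda>(i,j). if thr_adj a i j then 1 else 0)"

definition xv :: "bool list \<Rightarrow> real \<Rightarrow> real vec" where
  "xv a t = vec (length a) (\<lambda>i. if a ! i then 1 else real (bb a i) / t)"

lemma sum_if_set: fixes n :: nat shows "(\<Sum>j<n. if P j then f j else 0) = (\<Sum>j\<in>{j. j < n \<and> P j}. f j)"
  by (rule sum.mono_neutral_cong_right) auto

lemma Ar_carrier: "Ar a \<in> carrier_mat (length a) (length a)" unfolding Ar_def by simp

lemma adj_mat_Ar: "thr_adj_mat a = map_mat complex_of_real (Ar a)"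
  unfolding thr_adj_mat_def Ar_def by (intro eq_matI) auto

lemma Ar_sym: "transpose_mat (Ar a) = Ar a"
  unfolding Ar_def by (intro eq_matI) (auto simp: thr_adj_def max.commute)

lemma xv_carrier: "xv a t \<in> carrier_vec (length a)" unfolding xv_def by simp

lemma xx: "xv a t \<bullet> xv a t = real (card {i. i < length a \<and> a ! i})
     + (\<Sum>p\<in>{p. p < length a \<and> \<not> a ! p}. real ((bb a p)^2)) / t^2"
proof -
  define n where "n = length a"
  have "xv a t \<bullet> xv a t = (\<Sum>i<n. (if a ! i then 1 else real (bb a i) / t)^2)"
    unfolding xv_def scalar_prod_def n_def by (simp add: lessThan_atLeast0 power2_eq_square)
  also have "\<dots> = (\<Sum>i<n. (if a ! i then 1 else 0) + (if \<not> a ! i then real ((bb a i)^2) / t^2 else 0))"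
    by (rule sum.cong) (auto simp: power_divide)
  also have "\<dots> = (\<Sum>i<n. if a ! i then 1 else 0) + (\<Sum>i<n. if \<not> a ! i then real ((bb a i)^2) / t^2 else 0)"
    by (simp add: sum.distrib)
  also have "\<dots> = real (card {i. i < length a \<and> a ! i})
     + (\<Sum>p\<in>{p. p < length a \<and> \<not> a ! p}. real ((bb a p)^2)) / t^2"
    unfolding sum_ind sum_if_set n_def by (simp add: sum_divide_distrib)
  finally show ?thesis .
qed

lemma quad: "xv a t \<bullet> (Ar a *\<^sub>v xv a t) = real (card {i. i < length a \<and> a ! i}) * (real (card {i. i < length a \<and> a ! i}) - 1)
     + 2 * (\<Sum>p\<in>{p. p < length a \<and> \<not> a ! p}. real ((bb a p)^2)) / t"
proof -
  define n where "n = length a"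
  define c where "c = card {i. i < n \<and> a ! i}"
  define F where "F = (\<Sum>p\<in>{p. p < n \<and> \<not> a ! p}. real ((bb a p)^2))"
  define x where "x i = (if a ! i then 1 else real (bb a i) / t)" for i
  define g1 where "g1 i j = (if a ! i \<and> a ! j \<and> i \<noteq> j then 1 else (0::real))" for i j
  define g2 where "g2 i j = (if \<not> a ! i \<and> a ! j \<and> i < j then real (bb a i) / t else 0)" for i j
  define g3 where "g3 i j = (if a ! i \<and> \<not> a ! j \<and> j < i then real (bb a j) / t else 0)" for i j
  have e: "xv a t \<bullet> (Ar a *\<^sub>v xv a t) = (\<Sum>i<n. \<Sum>j<n. x i * (if thr_adj a i j then 1 else 0) * x j)"
    unfolding xv_def Ar_def n_def x_def
    by (auto simp: scalar_prod_def mult_mat_vec_def sum_distrib_left lessThan_atLeast0 mult.assoc intro!: sum.cong)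
  have pw: "x i * (if thr_adj a i j then 1 else 0) * x j = g1 i j + g2 i j + g3 i j" if "i < n" "j < n" for i j
    using that unfolding n_def
    by (cases "a!i"; cases "a!j"; cases "i<j"; cases "i=j"; simp add: x_def g1_def g2_def g3_def thr_adj_def max_def)
  have "xv a t \<bullet> (Ar a *\<^sub>v xv a t) = (\<Sum>i<n. \<Sum>j<n. g1 i j) + (\<Sum>i<n. \<Sum>j<n. g2 i j) + (\<Sum>i<n. \<Sum>j<n. g3 i j)"
    unfolding e by (simp add: pw sum.distrib)
  moreover have s3: "(\<Sum>i<n. \<Sum>j<n. g3 i j) = (\<Sum>i<n. \<Sum>j<n. g2 i j)"
    by (subst sum.swap) (auto simp: g2_def g3_def intro!: sum.cong)
  moreover have s2: "(\<Sum>i<n. \<Sum>j<n. g2 i j) = F / t"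
  proof -
    have "(\<Sum>j<n. g2 i j) = (if \<not> a ! i then real ((bb a i)^2) / t else 0)" if "i < n" for i
    proof (cases "a ! i")
      case False
      have "(\<Sum>j<n. g2 i j) = real (bb a i) / t * (\<Sum>j<n. if a ! j \<and> i < j then 1 else 0)"
        unfolding g2_def using False by (simp add: sum_distrib_left if_distrib cong: if_cong)
      also have "(\<Sum>j<n. if a ! j \<and> i < j then (1::real) else 0) = real (bb a i)"
        unfolding sum_ind bb_def n_def by (intro arg_cong[where f="\<lambda>S. real (card S)"]) auto
      finally show ?thesis using False by (simp add: power2_eq_square)
    qed (simp add: g2_def)
    hence "(\<Sum>i<n. \<Sum>j<n. g2 i j) = (\<Sum>i<n. if \<not> a ! i then real ((bb a i)^2) / t else 0)"
      by (intro sum.cong) auto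
    also have "\<dots> = F / t" unfolding sum_if_set F_def by (simp add: sum_divide_distrib)
    finally show ?thesis .
  qed
  moreover have s1: "(\<Sum>i<n. \<Sum>j<n. g1 i j) = real c * (real c - 1)"
  proof -
    have "(\<Sum>j<n. g1 i j) = (if a ! i then real c - 1 else 0)" if "i < n" for i
    proof (cases "a ! i")
      case True
      have h1: "(\<Sum>j<n. g1 i j) = real (card ({j. j < n \<and> a ! j} - {i}))"
        unfolding g1_def using True sum_ind[where n=n and P="\<lambda>j. a ! j \<and> i \<noteq> j"]
        by (simp cong: conj_cong) (intro arg_cong[where f=card], auto)
      have pos: "0 < card {j. j < n \<and> a ! j}" using True that by (subst card_gt_0_iff) auto
      have h2: "real (card ({j. j < n \<and> a ! j} - {i})) = real c - 1" unfolding c_def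
        by (subst card_Diff_singleton) (use True that pos in \<open>auto simp: of_nat_diff\<close>)
      show ?thesis using True h1 h2 by simp
    qed (simp add: g1_def)
    hence "(\<Sum>i<n. \<Sum>j<n. g1 i j) = (\<Sum>i<n. if a ! i then real c - 1 else 0)"
      by (intro sum.cong) auto
    also have "\<dots> = real c * (real c - 1)" unfolding sum_if_set c_def by simp
    finally show ?thesis .
  qed
  ultimately show ?thesis unfolding c_def F_def n_def by simp
qed

lemma c_ge2:
  assumes "a ! 0" "thr_size a > 0"
  shows "card {i. i < length a \<and> a ! i} \<ge> 2"
proof -
  from assms(2) have "{(i, j). i < j \<and> j < length a \<and> thr_adj a i j} \<noteq> {}"
    unfolding thr_size_def by (metis card.empty less_irrefl)
  then obtain i j where ij: "i < j" "j < length a" "thr_adj a i j" by auto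
  hence aj: "a ! j" unfolding thr_adj_def by (simp add: max_def)
  have "{0, j} \<subseteq> {i. i < length a \<and> a ! i}" using ij aj assms(1) by auto
  hence "card {0, j} \<le> card {i. i < length a \<and> a ! i}" by (intro card_mono) auto
  moreover have "card {0, j} = 2" using ij by auto
  ultimately show ?thesis by simp
qed

lemma rho_bound:
  assumes c2: "card {i. i < length a \<and> a ! i} \<ge> 2"
  shows "real (card {i. i < length a \<and> a ! i}) * spectral_radius (thr_adj_mat a)
           * (spectral_radius (thr_adj_mat a) + 1 - real (card {i. i < length a \<and> a ! i})) \<ge> real (thr_F1 a)
         \<and> spectral_radius (thr_adj_mat a) \<ge> real (card {i. i < length a \<and> a ! i}) - 1"
proof -
  define c where "c = real (card {i. i < length a \<and> a ! i})"
  define F where "F = (\<Sum>p\<in>{p. p < length a \<and> \<not> a ! p}. real ((bb a p)^2))"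
  define \<rho> where "\<rho> = spectral_radius (thr_adj_mat a)"
  have c2': "c \<ge> 2" using c2 unfolding c_def by simp
  have FF: "real (thr_F1 a) = F" unfolding F_def thr_F1_sum by simp
  have F0: "F \<ge> 0" unfolding F_def by (simp add: sum_nonneg)
  define D where "D = (c - 1)^2 + 4 * F / c"
  define l where "l = ((c - 1) + sqrt D) / 2"
  have D0: "D \<ge> (c-1)^2" unfolding D_def using F0 c2' by simp
  have sD: "sqrt D \<ge> c - 1"
  proof -
    have "sqrt ((c-1)^2) \<le> sqrt D" using D0 by (rule real_sqrt_le_mono)
    moreover have "sqrt ((c-1)^2) = c - 1" using c2' by simp
    ultimately show ?thesis by simp
  qed
  have lc: "l \<ge> c - 1" unfolding l_def using sD by simp
  have lpos: "l > 0" using lc c2' by simp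
  have D00: "D \<ge> 0" using D0 by (rule order_trans[rotated]) simp
  have sq: "(sqrt D)^2 = D" using D00 by (rule real_sqrt_pow2)
  have root: "c * l^2 - c * (c - 1) * l = F"
  proof -
    have gen: "((u + s)/2)^2 - u * ((u + s)/2) = (s^2 - u^2)/4" for u s :: real
      by (simp add: power2_eq_square field_simps)
    have "l^2 - (c - 1) * l = (D - (c-1)^2) / 4" unfolding l_def gen sq ..
    also have "\<dots> = F / c" unfolding D_def by simp
    finally have "l^2 - (c - 1) * l = F / c" .
    hence "c * (l^2 - (c - 1) * l) = F" using c2' by (simp add: field_simps)
    thus ?thesis by (simp add: algebra_simps)
  qed
  define x where "x = xv a l"
  have xx': "x \<bullet> x = c + F / l^2" unfolding x_def c_def F_def by (rule xx)
  have q': "x \<bullet> (Ar a *\<^sub>v x) = c * (c - 1) + 2 * F / l" unfolding x_def c_def F_def by (rule quad)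
  have xpos: "x \<bullet> x > 0" unfolding xx' using c2' F0 lpos by (simp add: add_pos_nonneg)
  have ray: "x \<bullet> (Ar a *\<^sub>v x) \<ge> l * (x \<bullet> x)"
  proof -
    have "l * (x \<bullet> x) = c * l + F / l" unfolding xx' using lpos by (simp add: field_simps power2_eq_square)
    also have "\<dots> = c * (c - 1) + 2 * F / l"
    proof -
      have "c * l = c * (c - 1) + F / l" using root lpos by (simp add: field_simps power2_eq_square)
      thus ?thesis by simp
    qed
    finally show ?thesis unfolding q' by simp
  qed
  have rl: "l \<le> \<rho>" unfolding \<rho>_def adj_mat_Ar
    by (rule rayleigh_sr[OF Ar_carrier Ar_sym _ xpos lpos ray]) (simp add: x_def xv_carrier)
  have "c * l * (l + 1 - c) \<le> c * \<rho> * (\<rho> + 1 - c)"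
    using rl lc c2' lpos by (intro mult_mono) auto
  moreover have "c * l * (l + 1 - c) = F" using root by (simp add: algebra_simps power2_eq_square)
  ultimately show ?thesis using FF rl lc unfolding c_def[symmetric] \<rho>_def[symmetric] by simp
qed

theorem theorem4p1:
  fixes a :: "bool list" and n m c :: nat and \<xi> \<rho> :: real
  assumes "length a = n" and "n \<ge> 4" and "a ! 0"
    and "thr_connected a"
    and "m = thr_size a" and "n - 1 < m" and "m < n choose 2"
    and "c = thr_c a"
    and "\<rho> = spectral_radius (thr_adj_mat a)"
    and "\<xi> = Max {x :: real. x ^ 3 - (real c + 1) * x ^ 2 + real c * x - real (thr_F1 a) = 0}"
  shows "\<xi> \<le> 1 + \<rho>"
proof -
  define F where "F = real (thr_F1 a)"
  define p where "p x = x ^ 3 - (real c + 1) * x ^ 2 + real c * x - F" for x :: real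
  have pf: "p x = x * (x - 1) * (x - real c) - F" for x unfolding p_def by (simp add: algebra_simps power2_eq_square power3_eq_cube)
  have cc: "c = card {i. i < length a \<and> a ! i}" using assms(8) thr_c_card by simp
  have c2: "card {i. i < length a \<and> a ! i} \<ge> 2" using c_ge2[OF assms(3)] assms(2,5,6) by simp
  from rho_bound[OF c2] have rb: "real c * \<rho> * (\<rho> + 1 - real c) \<ge> F" "\<rho> \<ge> real c - 1"
    unfolding cc[symmetric] assms(9)[symmetric] F_def by auto
  have c2': "real c \<ge> 2" using c2 cc by simp
  have rho0: "\<rho> \<ge> 0" using rb c2' by simp
  define y where "y = 1 + \<rho>"
  have py: "p y \<ge> 0"
  proof -
    have "real c * \<rho> * (\<rho> + 1 - real c) \<le> y * \<rho> * (\<rho> + 1 - real c)"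
      unfolding y_def using rb c2' rho0 by (intro mult_right_mono) auto
    moreover have "p y = y * \<rho> * (\<rho> + 1 - real c) - F"
      unfolding pf y_def by (simp add: algebra_simps)
    ultimately show ?thesis using rb by linarith
  qed
  have big: "p x > 0" if "x > y" for x
  proof -
    have "y * (y - 1) * (y - real c) \<le> y * (y - 1) * (x - real c)"
      using that rb c2' rho0 unfolding y_def by (intro mult_left_mono) auto
    also have "\<dots> < x * (x - 1) * (x - real c)"
      using that rb c2' rho0 unfolding y_def by (intro mult_strict_right_mono mult_strict_mono) auto
    finally show ?thesis unfolding pf using py unfolding pf by simp
  qed
  define S where "S = {x :: real. p x = 0}"
  have Seq: "{x :: real. x ^ 3 - (real c + 1) * x ^ 2 + real c * x - real (thr_F1 a) = 0} = S"
    unfolding S_def p_def F_def ..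
  have fin: "finite S"
  proof -
    define P where "P = [:-F, real c, -(real c + 1), 1:]"
    have "S = {x. poly P x = 0}"
      unfolding S_def p_def P_def by (simp add: algebra_simps power2_eq_square power3_eq_cube)
    moreover have "P \<noteq> 0" unfolding P_def by simp
    ultimately show ?thesis using poly_roots_finite[of P] by metis
  qed
  have ne: "S \<noteq> {}"
  proof -
    have "p 0 \<le> 0" unfolding p_def F_def by simp
    moreover have "continuous_on {0..y} p" unfolding p_def by (intro continuous_intros)
    ultimately obtain x where "p x = 0" using IVT'[of p 0 0 y] py rho0 unfolding y_def by auto
    thus ?thesis unfolding S_def by auto
  qed
  have "Max S \<in> S" using fin ne by simp
  hence "p (Max S) = 0" unfolding S_def by simp
  hence "Max S \<le> y" using big[of "Max S"] by (cases "Max S \<le> y") auto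
  thus ?thesis unfolding assms(10) Seq y_def .
qed

end
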